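(* For every $k$-tree $T$ and every $k$-clique $C$ of $T$, $R(T;C)>\overline N(T;C)$.
   Context: A $k$-tree is defined recursively: $K_k$ is a $k$-tree, and if $T$ is a $k$-tree then so is the graph obtained by joining a new vertex to all vertices of some $k$-clique of $T$; there are no others. A sub-$k$-tree is a subgraph that is itself a $k$-tree. $R(T;C)$ is the sum of the numbers of vertices of all sub-$k$-trees of $T$ containing $C$, and $\overline N(T;C)$ is the number of sub-$k$-trees of $T$ not containing $C$. *)

theory Defs
  imports Main
begin

text \<open>Graphs are pairs (V, E) of a vertex set and a set of 2-element edge sets.\<close>

definition complete_edges :: "'a set \<Rightarrow> 'a set set" where
  "complete_edges V = {e. \<exists>u v. u \<in> V \<and> v \<in> V \<and> u \<noteq> v \<and> e = {u, v}}"

definition is_clique :: "'a set set \<Rightarrow> 'a set \<Rightarrow> bool" where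
  "is_clique E C \<longleftrightarrow> (\<forall>u\<in>C. \<forall>w\<in>C. u \<noteq> w \<longrightarrow> {u, w} \<in> E)"

definition is_kclique :: "nat \<Rightarrow> 'a set \<Rightarrow> 'a set set \<Rightarrow> 'a set \<Rightarrow> bool" where
  "is_kclique k V E C \<longleftrightarrow> C \<subseteq> V \<and> finite C \<and> card C = k \<and> is_clique E C"

inductive ktree :: "nat \<Rightarrow> 'a set \<Rightarrow> 'a set set \<Rightarrow> bool" for k where
  base: "finite V \<Longrightarrow> card V = k \<Longrightarrow> ktree k V (complete_edges V)"
| step: "ktree k V E \<Longrightarrow> is_kclique k V E C \<Longrightarrow> v \<notin> V \<Longrightarrow>
         ktree k (insert v V) (E \<union> {{v, c} | c. c \<in> C})"

definition sub_ktrees :: "nat \<Rightarrow> 'a set \<Rightarrow> 'a set set \<Rightarrow> ('a set \<times> 'a set set) set" where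
  "sub_ktrees k V E = {(V', E'). V' \<subseteq> V \<and> E' \<subseteq> E \<and> ktree k V' E'}"

definition R_sum :: "nat \<Rightarrow> 'a set \<Rightarrow> 'a set set \<Rightarrow> 'a set \<Rightarrow> nat" where
  "R_sum k V E C = (\<Sum>S \<in> {S \<in> sub_ktrees k V E. is_kclique k (fst S) (snd S) C}. card (fst S))"

definition N_bar :: "nat \<Rightarrow> 'a set \<Rightarrow> 'a set set \<Rightarrow> 'a set \<Rightarrow> nat" where
  "N_bar k V E C = card {S \<in> sub_ktrees k V E. \<not> is_kclique k (fst S) (snd S) C}"

end

theory Submission
  imports Defs
begin

definition nbrs :: "'a set set \<Rightarrow> 'a \<Rightarrow> 'a set" where
  "nbrs E v = {u. {v, u} \<in> E}"

definition rem :: "'a set set \<Rightarrow> 'a \<Rightarrow> 'a set set" where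
  "rem E v = {e \<in> E. v \<notin> e}"

lemma ktree_basic:
  assumes "ktree k V E"
  shows "finite V \<and> k \<le> card V \<and> E \<subseteq> complete_edges V"
  using assms
proof induction
  case (base V) then show ?case by auto
next
  case (step V E C v)
  have "{{v, c} | c. c \<in> C} \<subseteq> complete_edges (insert v V)"
    using step.hyps(2,3) unfolding is_kclique_def complete_edges_def by blast
  moreover have "complete_edges V \<subseteq> complete_edges (insert v V)"
    unfolding complete_edges_def by blast
  ultimately show ?case using step by auto
qed

lemma ktree_card_k:
  assumes "ktree k V E" "card V = k" shows "E = complete_edges V"
  using assms
proof induction
  case (base V) then show ?case by simp
next
  case (step V E C v)
  then have "card (insert v V) = Suc (card V)" using ktree_basic by (metis card_insert_disjoint)
  then show ?case using step ktree_basic[OF step.hyps(1)] by linarith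
qed

lemma edge_not_outside:
  assumes "ktree k V E" "e \<in> E" "w \<notin> V" shows "w \<notin> e"
  using ktree_basic[OF assms(1)] assms(2,3) unfolding complete_edges_def by blast

lemma nbrs_sub:
  assumes "ktree k V E" shows "nbrs E v \<subseteq> V"
  using ktree_basic[OF assms(1)] unfolding complete_edges_def nbrs_def
  by (auto simp: doubleton_eq_iff)

lemma nbrs_fin:
  assumes "ktree k V E" shows "finite (nbrs E v)"
  using nbrs_sub[OF assms] ktree_basic[OF assms] finite_subset by blast

lemma ktree_deg:
  assumes "ktree k V E" shows "v \<in> V \<Longrightarrow> k < card V \<Longrightarrow> k \<le> card (nbrs E v)"
  using assms
proof (induction arbitrary: v)
  case (base V) then show ?case by simp
next
  case (step V E C w)
  let ?E' = "E \<union> {{w, c} | c. c \<in> C}"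
  have fin: "finite (nbrs ?E' v)" using nbrs_fin[OF ktree.step[OF step.hyps]] .
  show ?case
  proof (cases "v = w")
    case True
    have "C \<subseteq> nbrs ?E' v" using True unfolding nbrs_def by auto
    then have "card C \<le> card (nbrs ?E' v)" by (rule card_mono[OF fin])
    then show ?thesis using step.hyps(2) unfolding is_kclique_def by simp
  next
    case False
    hence vV: "v \<in> V" using step.prems by auto
    have mono: "nbrs E v \<subseteq> nbrs ?E' v" unfolding nbrs_def by auto
    show ?thesis
    proof (cases "k < card V")
      case True
      have "card (nbrs E v) \<le> card (nbrs ?E' v)" by (rule card_mono[OF fin mono])
      then show ?thesis using step.IH[OF vV True] by simp
    next
      case False
      hence cV: "card V = k" using ktree_basic[OF step.hyps(1)] by auto
      have fV: "finite V" using ktree_basic[OF step.hyps(1)] by auto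
      have CV: "C = V"
        using step.hyps(2) cV fV unfolding is_kclique_def by (intro card_subset_eq) auto
      have EV: "E = complete_edges V" using ktree_card_k[OF step.hyps(1) cV] .
      have sub: "insert w (V - {v}) \<subseteq> nbrs ?E' v"
      proof
        fix u assume u: "u \<in> insert w (V - {v})"
        show "u \<in> nbrs ?E' v"
        proof (cases "u = w")
          case True
          have "{v, u} = {w, v}" using True by auto
          then show ?thesis unfolding nbrs_def using CV vV by auto
        next
          case False
          then show ?thesis using u vV unfolding nbrs_def EV complete_edges_def by auto
        qed
      qed
      have "card (V - {v}) = k - 1" using fV vV cV by simp
      moreover have "w \<notin> V - {v}" using step.hyps(3) by auto
      moreover have "k \<ge> 1" using cV vV fV card_0_eq by fastforce
      ultimately have "card (insert w (V - {v})) = k" using fV by simp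
      moreover have "card (insert w (V - {v})) \<le> card (nbrs ?E' v)" by (rule card_mono[OF fin sub])
      ultimately show ?thesis by simp
    qed
  qed
qed


lemma kc_mono:
  assumes "is_kclique k A B D" "A \<subseteq> A'" "B \<subseteq> B'" shows "is_kclique k A' B' D"
  using assms unfolding is_kclique_def is_clique_def by blast

lemma ktree_remove:
  assumes "ktree k V E"
  shows "v \<in> V \<Longrightarrow> k < card V \<Longrightarrow> card (nbrs E v) \<le> k \<Longrightarrow>
     ktree k (V - {v}) (rem E v) \<and> is_kclique k (V - {v}) (rem E v) (nbrs E v)"
  using assms
proof (induction arbitrary: v)
  case (base V) then show ?case by simp
next
  case (step V E C w)
  let ?S = "{{w, c} | c. c \<in> C}"
  let ?E' = "E \<union> ?S"
  have T': "ktree k (insert w V) ?E'" using ktree.step[OF step.hyps] .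
  have fV: "finite V" and kV: "k \<le> card V" and EV: "E \<subseteq> complete_edges V"
    using ktree_basic[OF step.hyps(1)] by auto
  have CV: "C \<subseteq> V" and fC: "finite C" and cC: "card C = k" and clC: "is_clique E C"
    using step.hyps(2) unfolding is_kclique_def by auto
  have noW: "\<And>e. e \<in> E \<Longrightarrow> w \<notin> e" using edge_not_outside[OF step.hyps(1)] step.hyps(3) by blast
  show ?case
  proof (cases "v = w")
    case True
    have r: "rem ?E' w = E" unfolding rem_def using noW by auto
    have n: "nbrs ?E' w = C"
    proof
      show "nbrs ?E' w \<subseteq> C"
      proof
        fix u assume "u \<in> nbrs ?E' w"
        hence "{w, u} \<in> E \<or> {w, u} \<in> ?S" unfolding nbrs_def by auto
        moreover have "{w, u} \<notin> E" using noW by auto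
        ultimately obtain c where c: "c \<in> C" "{w, u} = {w, c}" by auto
        have "c \<noteq> w" using c(1) CV step.hyps(3) by auto
        then show "u \<in> C" using c by (auto simp: doubleton_eq_iff)
      qed
    next
      show "C \<subseteq> nbrs ?E' w" unfolding nbrs_def by auto
    qed
    have "insert w V - {w} = V" using step.hyps(3) by auto
    then show ?thesis using True r n step.hyps(1,2) by simp
  next
    case False
    hence vV: "v \<in> V" using step.prems by auto
    show ?thesis
    proof (cases "k < card V")
      case True
      have mono: "nbrs E v \<subseteq> nbrs ?E' v" unfolding nbrs_def by auto
      have fin: "finite (nbrs ?E' v)" using nbrs_fin[OF T'] .
      have d: "k \<le> card (nbrs E v)" using ktree_deg[OF step.hyps(1) vV True] .
      have vC: "v \<notin> C"
      proof
        assume "v \<in> C"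
        hence "{v, w} \<in> ?S" by auto
        hence "insert w (nbrs E v) \<subseteq> nbrs ?E' v" using mono unfolding nbrs_def by auto
        hence "card (insert w (nbrs E v)) \<le> card (nbrs ?E' v)" by (rule card_mono[OF fin])
        moreover have "w \<notin> nbrs E v" using nbrs_sub[OF step.hyps(1)] step.hyps(3) by auto
        ultimately have "Suc (card (nbrs E v)) \<le> card (nbrs ?E' v)"
          using nbrs_fin[OF step.hyps(1)] by simp
        then show False using d step.prems(3) by simp
      qed
      have neq: "nbrs ?E' v = nbrs E v"
      proof
        show "nbrs ?E' v \<subseteq> nbrs E v"
        proof
          fix u assume "u \<in> nbrs ?E' v"
          hence "{v, u} \<in> E \<or> {v, u} \<in> ?S" unfolding nbrs_def by auto
          moreover have "{v, u} \<notin> ?S"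
          proof
            assume "{v, u} \<in> ?S"
            then obtain c where c: "c \<in> C" "{v, u} = {w, c}" by auto
            then show False using False vC by (auto simp: doubleton_eq_iff)
          qed
          ultimately show "u \<in> nbrs E v" unfolding nbrs_def by auto
        qed
      qed (rule mono)
      have IH: "ktree k (V - {v}) (rem E v)" "is_kclique k (V - {v}) (rem E v) (nbrs E v)"
        using step.IH[OF vV True] step.prems(3) neq by auto
      have Cc: "is_kclique k (V - {v}) (rem E v) C"
        using CV fC cC clC vC unfolding is_kclique_def is_clique_def rem_def by auto
      have "ktree k (insert w (V - {v})) (rem E v \<union> ?S)"
        using ktree.step[OF IH(1) Cc] step.hyps(3) by auto
      moreover have "insert w (V - {v}) = insert w V - {v}" using False by auto
      moreover have "rem E v \<union> ?S = rem ?E' v"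
        unfolding rem_def using False vC by auto
      moreover have "is_kclique k (insert w V - {v}) (rem ?E' v) (nbrs ?E' v)"
        using IH(2) neq by (rule_tac kc_mono) (auto simp: rem_def)
      ultimately show ?thesis by simp
    next
      case False
      hence cV: "card V = k" using kV by auto
      have CV': "C = V" using CV fV cC cV by (intro card_subset_eq) auto
      have EV': "E = complete_edges V" using ktree_card_k[OF step.hyps(1) cV] .
      have E'c: "?E' = complete_edges (insert w V)"
      proof
        show "?E' \<subseteq> complete_edges (insert w V)"
          using ktree_basic[OF T'] by blast
      next
        show "complete_edges (insert w V) \<subseteq> ?E'"
        proof
          fix e assume "e \<in> complete_edges (insert w V)"
          then obtain a b where ab: "a \<in> insert w V" "b \<in> insert w V" "a \<noteq> b" "e = {a, b}"
            unfolding complete_edges_def by blast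
          show "e \<in> ?E'"
          proof (cases "a = w")
            case True then show ?thesis using ab CV' by auto
          next
            case F1: False
            show ?thesis
            proof (cases "b = w")
              case True
              hence "e = {w, a}" using ab by blast
              moreover have "a \<in> C" using ab F1 CV' by blast
              ultimately show ?thesis by blast
            next
              case False then show ?thesis using ab F1 unfolding EV' complete_edges_def by auto
            qed
          qed
        qed
      qed
      let ?W = "insert w V - {v}"
      have c1: "card ?W = k" using fV vV cV step.hyps(3) by simp
      have f1: "finite ?W" using fV by simp
      have r1: "rem ?E' v = complete_edges ?W"
        unfolding E'c rem_def complete_edges_def by auto
      have n1: "nbrs ?E' v = ?W"
        unfolding E'c nbrs_def complete_edges_def using vV by (auto simp: doubleton_eq_iff)
      have "ktree k ?W (complete_edges ?W)" by (rule ktree.base[OF f1 c1])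
      moreover have "is_kclique k ?W (complete_edges ?W) ?W"
        using f1 c1 unfolding is_kclique_def is_clique_def complete_edges_def by blast
      ultimately show ?thesis unfolding r1 n1 by blast
    qed
  qed
qed


definition subD :: "nat \<Rightarrow> 'a set \<Rightarrow> 'a set set \<Rightarrow> 'a set set \<Rightarrow> ('a set \<times> 'a set set) set" where
  "subD k V E Ds = {S \<in> sub_ktrees k V E. \<forall>D\<in>Ds. is_kclique k (fst S) (snd S) D}"

definition cnt :: "nat \<Rightarrow> 'a set \<Rightarrow> 'a set set \<Rightarrow> 'a set set \<Rightarrow> nat" where
  "cnt k V E Ds = card (subD k V E Ds)"

definition sm :: "nat \<Rightarrow> 'a set \<Rightarrow> 'a set set \<Rightarrow> 'a set set \<Rightarrow> nat" where
  "sm k V E Ds = (\<Sum>S \<in> subD k V E Ds. card (fst S))"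

lemma sub_fin:
  assumes "ktree k V E" shows "finite (sub_ktrees k V E)"
proof -
  have fV: "finite V" and EV: "E \<subseteq> complete_edges V" using ktree_basic[OF assms] by auto
  have "E \<subseteq> Pow V" using EV unfolding complete_edges_def by auto
  moreover have "finite (Pow V)" using fV by simp
  ultimately have fE: "finite E" by (rule finite_subset)
  have "sub_ktrees k V E \<subseteq> Pow V \<times> Pow E" unfolding sub_ktrees_def by auto
  moreover have "finite (Pow V \<times> Pow E)" using fV fE by simp
  ultimately show ?thesis by (rule finite_subset)
qed

lemma subD_fin:
  assumes "ktree k V E" shows "finite (subD k V E Ds)"
  using sub_fin[OF assms] unfolding subD_def by auto

lemma self_in_subD:
  assumes "ktree k V E" "\<forall>D\<in>Ds. is_kclique k V E D" shows "(V, E) \<in> subD k V E Ds"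
  using assms unfolding subD_def sub_ktrees_def by auto

lemma cnt_pos:
  assumes "ktree k V E" "\<forall>D\<in>Ds. is_kclique k V E D" shows "1 \<le> cnt k V E Ds"
proof -
  have "subD k V E Ds \<noteq> {}" using self_in_subD[OF assms] by blast
  then have "0 < card (subD k V E Ds)" using subD_fin[OF assms(1)] by (simp add: card_gt_0_iff)
  then show ?thesis unfolding cnt_def by simp
qed

lemma sm_ge:
  assumes "ktree k V E" "\<forall>D\<in>Ds. is_kclique k V E D" shows "card V \<le> sm k V E Ds"
proof -
  have "card (fst (V, E)) \<le> sm k V E Ds" unfolding sm_def
    by (rule member_le_sum[OF self_in_subD[OF assms] _ subD_fin[OF assms(1)]]) auto
  then show ?thesis by simp
qed

locale ext_ctx =
  fixes k :: nat and V :: "'a set" and E :: "'a set set" and Q :: "'a set" and w :: 'a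
  assumes T0: "ktree k V E" and Qc: "is_kclique k V E Q" and wV: "w \<notin> V" and k1: "1 \<le> k"
begin

abbreviation "St \<equiv> {{w, c} | c. c \<in> Q}"
abbreviation "V' \<equiv> insert w V"
abbreviation "E' \<equiv> E \<union> St"

definition ext :: "'a set \<times> 'a set set \<Rightarrow> 'a set \<times> 'a set set" where
  "ext S = (insert w (fst S), snd S \<union> St)"

definition Kv :: "'a set set \<Rightarrow> ('a set \<times> 'a set set) set" where
  "Kv Ds = {S \<in> subD k V' E' Ds. w \<in> fst S \<and> card (fst S) = k}"

definition Dpp :: "'a set set \<Rightarrow> 'a set set" where
  "Dpp Ds = insert Q {D \<in> Ds. w \<notin> D}"

lemma T': "ktree k V' E'" using ktree.step[OF T0 Qc wV] .

lemma QV: "Q \<subseteq> V" and fQ: "finite Q" and cQ: "card Q = k" and clQ: "is_clique E Q"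
  using Qc unfolding is_kclique_def by auto

lemma fV: "finite V" and kV: "k \<le> card V" using ktree_basic[OF T0] by auto

lemma noW: "e \<in> E \<Longrightarrow> w \<notin> e" using edge_not_outside[OF T0 _ wV] by blast

lemma wQ: "w \<notin> Q" using QV wV by auto

lemma St_w: "e \<in> St \<Longrightarrow> w \<in> e" by auto

lemma nbrs_w: "nbrs E' w = Q"
proof
  show "nbrs E' w \<subseteq> Q"
  proof
    fix u assume "u \<in> nbrs E' w"
    hence "{w, u} \<in> E \<or> {w, u} \<in> St" unfolding nbrs_def by auto
    moreover have "{w, u} \<notin> E" using noW by auto
    ultimately obtain c where c: "c \<in> Q" "{w, u} = {w, c}" by auto
    have "c \<noteq> w" using c(1) wQ by auto
    then show "u \<in> Q" using c by (auto simp: doubleton_eq_iff)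
  qed
next
  show "Q \<subseteq> nbrs E' w" unfolding nbrs_def by auto
qed

lemma kc_down:
  assumes "is_kclique k V' E' D" "w \<notin> D" shows "is_kclique k V E D"
proof -
  have "{u, x} \<notin> St" if "u \<in> D" "x \<in> D" for u x
  proof
    assume "{u, x} \<in> St"
    then obtain c where "{u, x} = {w, c}" by blast
    hence "w \<in> {u, x}" by (metis insertI1)
    then show False using that assms(2) by blast
  qed
  then have "is_clique E D" using assms(1) unfolding is_kclique_def is_clique_def by blast
  moreover have "D \<subseteq> V" using assms unfolding is_kclique_def by blast
  ultimately show ?thesis using assms(1) unfolding is_kclique_def by simp
qed

lemma kc_w:
  assumes "is_kclique k V' E' D" "w \<in> D" shows "D \<subseteq> insert w Q"
proof
  fix u assume u: "u \<in> D"
  show "u \<in> insert w Q"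
  proof (cases "u = w")
    case False
    have "is_clique E' D" using assms(1) unfolding is_kclique_def by simp
    then have "{w, u} \<in> E'" using assms(2) u False unfolding is_clique_def by auto
    hence "u \<in> nbrs E' w" unfolding nbrs_def by simp
    then show ?thesis using nbrs_w by simp
  qed simp
qed

lemma kc_ext:
  assumes "is_kclique k A B Q" "D \<subseteq> insert w Q" "finite D" "card D = k"
  shows "is_kclique k (insert w A) (B \<union> St) D"
proof -
  have QA: "Q \<subseteq> A" and cl: "is_clique B Q" using assms(1) unfolding is_kclique_def by auto
  have E1: "{u, x} \<in> B \<union> St" if ux: "u \<in> D" "x \<in> D" "u \<noteq> x" for u x
  proof (cases "u = w")
    case True
    hence "x \<in> Q" using ux assms(2) by blast
    then show ?thesis using True by blast
  next
    case F: False
    show ?thesis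
    proof (cases "x = w")
      case True
      hence "u \<in> Q" using ux F assms(2) by blast
      moreover have "{u, x} = {w, u}" using True by blast
      ultimately show ?thesis by blast
    next
      case False
      hence "u \<in> Q" "x \<in> Q" using ux F assms(2) by blast+
      then show ?thesis using cl ux(3) unfolding is_clique_def by blast
    qed
  qed
  have "D \<subseteq> insert w A" using assms(2) QA by blast
  then show ?thesis unfolding is_kclique_def is_clique_def
  proof (intro conjI ballI impI)
    show "finite D" by (rule assms(3))
    show "card D = k" by (rule assms(4))
    fix u x assume "u \<in> D" "x \<in> D" "u \<noteq> x" then show "{u, x} \<in> B \<union> St" by (rule E1)
  qed
qed


lemma subD_old: "subD k V E Ds \<subseteq> subD k V' E' Ds"
  unfolding subD_def sub_ktrees_def by auto

lemma subD_V_props: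
  assumes "S \<in> subD k V E Ds"
  shows "fst S \<subseteq> V" "snd S \<subseteq> E" "ktree k (fst S) (snd S)"
    "\<forall>D\<in>Ds. is_kclique k (fst S) (snd S) D"
  using assms unfolding subD_def sub_ktrees_def by auto

lemma subD_V'_props:
  assumes "S \<in> subD k V' E' Ds"
  shows "fst S \<subseteq> V'" "snd S \<subseteq> E'" "ktree k (fst S) (snd S)"
    "\<forall>D\<in>Ds. is_kclique k (fst S) (snd S) D"
  using assms unfolding subD_def sub_ktrees_def by auto

lemma ext_in:
  assumes Ds: "\<forall>D\<in>Ds. is_kclique k V' E' D" and S: "S \<in> subD k V E (Dpp Ds)"
  shows "ext S \<in> subD k V' E' Ds"
proof -
  obtain A B where AB: "S = (A, B)" by (cases S)
  have A: "A \<subseteq> V" and B: "B \<subseteq> E" and T: "ktree k A B"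
    and P: "\<forall>D\<in>Dpp Ds. is_kclique k A B D"
    using subD_V_props[OF S] AB by auto
  have QAB: "is_kclique k A B Q" using P unfolding Dpp_def by auto
  have wA: "w \<notin> A" using A wV by auto
  have T2: "ktree k (insert w A) (B \<union> St)" by (rule ktree.step[OF T QAB wA])
  have sub: "insert w A \<subseteq> V'" "B \<union> St \<subseteq> E'" using A B by auto
  have "is_kclique k (insert w A) (B \<union> St) D" if D: "D \<in> Ds" for D
  proof (cases "w \<in> D")
    case True
    have "D \<subseteq> insert w Q" by (rule kc_w[OF Ds[rule_format, OF D] True])
    moreover have "finite D" "card D = k" using Ds D unfolding is_kclique_def by auto
    ultimately show ?thesis using kc_ext[OF QAB] by blast
  next
    case False
    hence "is_kclique k A B D" using P D unfolding Dpp_def by auto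
    then show ?thesis by (rule kc_mono) auto
  qed
  then show ?thesis using T2 sub unfolding AB ext_def subD_def sub_ktrees_def by auto
qed

lemma Kv_sub: "Kv Ds \<subseteq> subD k V' E' Ds" unfolding Kv_def by auto

lemma decomp_sub:
  assumes S: "S \<in> subD k V' E' Ds"
  shows "S \<in> subD k V E Ds \<union> Kv Ds \<union> ext ` subD k V E (Dpp Ds)"
proof -
  obtain A B where AB: "S = (A, B)" by (cases S)
  have A: "A \<subseteq> V'" and B: "B \<subseteq> E'" and T: "ktree k A B"
    and P: "\<forall>D\<in>Ds. is_kclique k A B D"
    using subD_V'_props[OF S] AB by auto
  have BA: "B \<subseteq> complete_edges A" and fA: "finite A" and kA: "k \<le> card A"
    using ktree_basic[OF T] by auto
  show ?thesis
  proof (cases "w \<in> A")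
    case False
    have "A \<subseteq> V" using A False by auto
    moreover have "B \<subseteq> E"
    proof
      fix b assume b: "b \<in> B"
      have "w \<notin> b" using edge_not_outside[OF T b False] .
      then show "b \<in> E" using b B by auto
    qed
    ultimately have "S \<in> subD k V E Ds" using T P unfolding AB subD_def sub_ktrees_def by auto
    then show ?thesis by blast
  next
    case wA: True
    show ?thesis
    proof (cases "card A = k")
      case True
      then have "S \<in> Kv Ds" using S wA unfolding Kv_def AB by auto
      then show ?thesis by blast
    next
      case False
      hence kA': "k < card A" using kA by auto
      have nsub: "nbrs B w \<subseteq> Q" using B nbrs_w unfolding nbrs_def by auto
      have "card (nbrs B w) \<le> card Q" by (rule card_mono[OF fQ nsub])
      hence nk: "card (nbrs B w) \<le> k" using cQ by simp
      have R: "ktree k (A - {w}) (rem B w)" "is_kclique k (A - {w}) (rem B w) (nbrs B w)"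
        using ktree_remove[OF T wA kA' nk] by auto
      have nQ: "nbrs B w = Q"
        using nsub fQ R(2) cQ unfolding is_kclique_def by (intro card_subset_eq) auto
      let ?S0 = "(A - {w}, rem B w)"
      have "A - {w} \<subseteq> V" using A by auto
      moreover have "rem B w \<subseteq> E" using B unfolding rem_def by auto
      moreover have "\<forall>D\<in>Dpp Ds. is_kclique k (A - {w}) (rem B w) D"
      proof
        fix D assume "D \<in> Dpp Ds"
        then consider "D = Q" | "D \<in> Ds" "w \<notin> D" unfolding Dpp_def by auto
        then show "is_kclique k (A - {w}) (rem B w) D"
        proof cases
          case 1 then show ?thesis using R(2) nQ by simp
        next
          case 2
          have "is_kclique k A B D" using P 2(1) by blast
          then show ?thesis using 2(2) unfolding is_kclique_def is_clique_def rem_def by auto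
        qed
      qed
      ultimately have S0: "?S0 \<in> subD k V E (Dpp Ds)"
        using R(1) unfolding subD_def sub_ktrees_def by auto
      have "insert w (A - {w}) = A" using wA by auto
      moreover have "rem B w \<union> St = B"
      proof
        show "rem B w \<union> St \<subseteq> B"
        proof
          fix e assume "e \<in> rem B w \<union> St"
          then consider "e \<in> B" | c where "c \<in> Q" "e = {w, c}" unfolding rem_def by auto
          then show "e \<in> B"
          proof cases
            case 2 then show ?thesis using nQ unfolding nbrs_def by auto
          qed simp
        qed
      next
        show "B \<subseteq> rem B w \<union> St"
        proof
          fix e assume eB: "e \<in> B"
          show "e \<in> rem B w \<union> St"
          proof (cases "w \<in> e")
            case False then show ?thesis using eB unfolding rem_def by auto
          next
            case True
            obtain a b where ab: "e = {a, b}" "a \<noteq> b" using eB BA unfolding complete_edges_def by blast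
            then obtain c where ec: "e = {w, c}" using True by auto
            hence "c \<in> nbrs B w" using eB unfolding nbrs_def by simp
            then show ?thesis using nQ ec by auto
          qed
        qed
      qed
      ultimately have "ext ?S0 = S" unfolding ext_def AB by simp
      then show ?thesis using S0 by (metis UnI2 imageI)
    qed
  qed
qed

lemma decomp:
  assumes Ds: "\<forall>D\<in>Ds. is_kclique k V' E' D"
  shows "subD k V' E' Ds = subD k V E Ds \<union> Kv Ds \<union> ext ` subD k V E (Dpp Ds)"
proof
  show "subD k V' E' Ds \<subseteq> subD k V E Ds \<union> Kv Ds \<union> ext ` subD k V E (Dpp Ds)"
    using decomp_sub by blast
  show "subD k V E Ds \<union> Kv Ds \<union> ext ` subD k V E (Dpp Ds) \<subseteq> subD k V' E' Ds"
    using subD_old Kv_sub ext_in[OF Ds] by blast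
qed

lemma subD_V_w: "S \<in> subD k V E X \<Longrightarrow> w \<notin> fst S"
  using subD_V_props(1) wV by blast

lemma ext_fst_card: "S \<in> subD k V E X \<Longrightarrow> card (fst (ext S)) = Suc (card (fst S))"
proof -
  assume S: "S \<in> subD k V E X"
  have "finite (fst S)" using subD_V_props(1)[OF S] fV by (rule finite_subset)
  then show ?thesis using subD_V_w[OF S] unfolding ext_def by simp
qed

lemma ext_k: "S \<in> subD k V E X \<Longrightarrow> k < card (fst (ext S))"
proof -
  assume S: "S \<in> subD k V E X"
  have "k \<le> card (fst S)" using ktree_basic[OF subD_V_props(3)[OF S]] by simp
  then show ?thesis using ext_fst_card[OF S] by simp
qed

lemma ext_inj: "inj_on ext (subD k V E X)"
proof
  fix S1 S2 assume S1: "S1 \<in> subD k V E X" and S2: "S2 \<in> subD k V E X" and eq: "ext S1 = ext S2"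
  have "fst S1 = fst (ext S1) - {w}" using subD_V_w[OF S1] unfolding ext_def by auto
  moreover have "fst S2 = fst (ext S2) - {w}" using subD_V_w[OF S2] unfolding ext_def by auto
  moreover have "snd S1 = rem (snd (ext S1)) w"
    using subD_V_props(2)[OF S1] noW unfolding ext_def rem_def by auto
  moreover have "snd S2 = rem (snd (ext S2)) w"
    using subD_V_props(2)[OF S2] noW unfolding ext_def rem_def by auto
  ultimately show "S1 = S2" using eq by (simp add: prod_eq_iff)
qed

lemma Kv_fin: "finite (Kv Ds)"
  using subD_fin[OF T'] Kv_sub finite_subset by blast

lemma cnt_decomp:
  assumes Ds: "\<forall>D\<in>Ds. is_kclique k V' E' D"
  shows "cnt k V' E' Ds = cnt k V E Ds + card (Kv Ds) + cnt k V E (Dpp Ds)"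
proof -
  have d1: "subD k V E Ds \<inter> Kv Ds = {}" using subD_V_w unfolding Kv_def by blast
  have d2: "(subD k V E Ds \<union> Kv Ds) \<inter> ext ` subD k V E (Dpp Ds) = {}"
  proof -
    have "ext S \<notin> subD k V E Ds" if "S \<in> subD k V E (Dpp Ds)" for S
      using subD_V_w[of "ext S"] unfolding ext_def by auto
    moreover have "ext S \<notin> Kv Ds" if "S \<in> subD k V E (Dpp Ds)" for S
      using ext_k[OF that] unfolding Kv_def by auto
    ultimately show ?thesis by blast
  qed
  have f1: "finite (subD k V E Ds)" "finite (subD k V E (Dpp Ds))" using subD_fin[OF T0] by auto
  have "card (subD k V' E' Ds) = card (subD k V E Ds \<union> Kv Ds) + card (ext ` subD k V E (Dpp Ds))"
    unfolding decomp[OF Ds] by (rule card_Un_disjoint) (use f1 Kv_fin d2 in auto)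
  also have "card (subD k V E Ds \<union> Kv Ds) = card (subD k V E Ds) + card (Kv Ds)"
    by (rule card_Un_disjoint) (use f1 Kv_fin d1 in auto)
  also have "card (ext ` subD k V E (Dpp Ds)) = card (subD k V E (Dpp Ds))"
    by (rule card_image[OF ext_inj])
  finally show ?thesis unfolding cnt_def by simp
qed

lemma Kv_card_fst: "S \<in> Kv Ds \<Longrightarrow> card (fst S) = k" unfolding Kv_def by auto

lemma sm_decomp:
  assumes Ds: "\<forall>D\<in>Ds. is_kclique k V' E' D"
  shows "sm k V' E' Ds = sm k V E Ds + k * card (Kv Ds) + sm k V E (Dpp Ds) + cnt k V E (Dpp Ds)"
proof -
  have d1: "subD k V E Ds \<inter> Kv Ds = {}" using subD_V_w unfolding Kv_def by blast
  have d2: "(subD k V E Ds \<union> Kv Ds) \<inter> ext ` subD k V E (Dpp Ds) = {}"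
  proof -
    have "ext S \<notin> subD k V E Ds" if "S \<in> subD k V E (Dpp Ds)" for S
      using subD_V_w[of "ext S"] unfolding ext_def by auto
    moreover have "ext S \<notin> Kv Ds" if "S \<in> subD k V E (Dpp Ds)" for S
      using ext_k[OF that] unfolding Kv_def by auto
    ultimately show ?thesis by blast
  qed
  have f1: "finite (subD k V E Ds)" "finite (subD k V E (Dpp Ds))" using subD_fin[OF T0] by auto
  let ?f = "\<lambda>S. card (fst S)"
  have "sum ?f (subD k V' E' Ds) = sum ?f (subD k V E Ds \<union> Kv Ds) + sum ?f (ext ` subD k V E (Dpp Ds))"
    unfolding decomp[OF Ds] by (rule sum.union_disjoint) (use f1 Kv_fin d2 in auto)
  also have "sum ?f (subD k V E Ds \<union> Kv Ds) = sum ?f (subD k V E Ds) + sum ?f (Kv Ds)"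
    by (rule sum.union_disjoint) (use f1 Kv_fin d1 in auto)
  also have "sum ?f (Kv Ds) = k * card (Kv Ds)"
    using Kv_card_fst by (simp add: sum.cong[of "Kv Ds" "Kv Ds" ?f "\<lambda>_. k"])
  also have "sum ?f (ext ` subD k V E (Dpp Ds)) = sum (?f \<circ> ext) (subD k V E (Dpp Ds))"
    by (rule sum.reindex[OF ext_inj])
  also have "\<dots> = sum (\<lambda>S. Suc (?f S)) (subD k V E (Dpp Ds))"
    by (rule sum.cong) (auto simp: ext_fst_card)
  also have "\<dots> = sum ?f (subD k V E (Dpp Ds)) + card (subD k V E (Dpp Ds))"
    unfolding Suc_eq_plus1 sum.distrib by simp
  finally show ?thesis unfolding sm_def cnt_def by simp
qed

lemma subD_empty: "D \<in> Ds \<Longrightarrow> w \<in> D \<Longrightarrow> subD k V E Ds = {}"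
  using wV unfolding subD_def sub_ktrees_def is_kclique_def by auto

lemma Kv_elem:
  assumes S: "S \<in> Kv Ds"
  shows "snd S = complete_edges (fst S)" "w \<in> fst S" "fst S \<subseteq> insert w Q" "card (fst S) = k"
    "finite (fst S)"
proof -
  have S': "S \<in> subD k V' E' Ds" using S Kv_sub by blast
  have T: "ktree k (fst S) (snd S)" using subD_V'_props(3)[OF S'] .
  show c: "card (fst S) = k" and w: "w \<in> fst S" using S unfolding Kv_def by auto
  show e: "snd S = complete_edges (fst S)" using ktree_card_k[OF T c] .
  show "finite (fst S)" using ktree_basic[OF T] by simp
  show "fst S \<subseteq> insert w Q"
  proof
    fix u assume u: "u \<in> fst S"
    show "u \<in> insert w Q"
    proof (cases "u = w")
      case False
      hence "{w, u} \<in> snd S" using u w e unfolding complete_edges_def by auto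
      hence "{w, u} \<in> E'" using subD_V'_props(2)[OF S'] by blast
      hence "u \<in> nbrs E' w" unfolding nbrs_def by simp
      then show ?thesis using nbrs_w by simp
    qed simp
  qed
qed

lemma Kv_le_k: "card (Kv Ds) \<le> k"
proof -
  let ?g = "\<lambda>S. fst S - {w}"
  have inj: "inj_on ?g (Kv Ds)"
  proof
    fix S1 S2 assume a: "S1 \<in> Kv Ds" "S2 \<in> Kv Ds" "?g S1 = ?g S2"
    have "fst S1 = fst S2" using a Kv_elem(2)[OF a(1)] Kv_elem(2)[OF a(2)] by blast
    moreover have "snd S1 = snd S2" using calculation Kv_elem(1)[OF a(1)] Kv_elem(1)[OF a(2)] by simp
    ultimately show "S1 = S2" by (simp add: prod_eq_iff)
  qed
  have img: "?g ` Kv Ds \<subseteq> {X. X \<subseteq> Q \<and> card X = k - 1}"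
  proof
    fix X assume "X \<in> ?g ` Kv Ds"
    then obtain S where S: "S \<in> Kv Ds" "X = fst S - {w}" by blast
    have "X \<subseteq> Q" using Kv_elem(3)[OF S(1)] S(2) by auto
    moreover have "card X = k - 1" using Kv_elem(2,4,5)[OF S(1)] S(2) by simp
    ultimately show "X \<in> {X. X \<subseteq> Q \<and> card X = k - 1}" by simp
  qed
  have fin: "finite {X. X \<subseteq> Q \<and> card X = k - 1}" using fQ by simp
  have "card (Kv Ds) = card (?g ` Kv Ds)" using card_image[OF inj] by simp
  also have "\<dots> \<le> card {X. X \<subseteq> Q \<and> card X = k - 1}" by (rule card_mono[OF fin img])
  also have "\<dots> = k choose (k - 1)" using n_subsets[OF fQ] cQ by simp
  also have "\<dots> = k" using k1 by (metis Suc_diff_1 binomial_Suc_n less_le_trans zero_less_one)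
  finally show ?thesis .
qed

lemma Kv_le_1:
  assumes "D \<in> Ds" "w \<in> D" shows "card (Kv Ds) \<le> 1"
proof -
  have "Kv Ds \<subseteq> {(D, complete_edges D)}"
  proof
    fix S assume S: "S \<in> Kv Ds"
    have "is_kclique k (fst S) (snd S) D" using S assms(1) unfolding Kv_def subD_def by auto
    hence "D \<subseteq> fst S" "card D = k" unfolding is_kclique_def by auto
    hence "D = fst S" using Kv_elem(4,5)[OF S] by (intro card_subset_eq) auto
    then show "S \<in> {(D, complete_edges D)}" using Kv_elem(1)[OF S] by (simp add: prod_eq_iff)
  qed
  then have "card (Kv Ds) \<le> card {(D, complete_edges D)}" by (rule card_mono[rotated]) simp
  then show ?thesis by simp
qed

lemma Kv_0:
  assumes "D \<in> Ds" "w \<notin> D" shows "Kv Ds = {}"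
proof (rule ccontr)
  assume "Kv Ds \<noteq> {}"
  then obtain S where S: "S \<in> Kv Ds" by blast
  have "is_kclique k (fst S) (snd S) D" using S assms(1) unfolding Kv_def subD_def by auto
  hence "D \<subseteq> fst S" "card D = k" unfolding is_kclique_def by auto
  hence "D = fst S" using Kv_elem(4,5)[OF S] by (intro card_subset_eq) auto
  then show False using Kv_elem(2)[OF S] assms(2) by simp
qed

lemma Kv_C:
  assumes C: "is_kclique k V' E' C" and wC: "w \<in> C" shows "1 \<le> card (Kv {C})"
proof -
  have fC: "finite C" and cC: "card C = k" and CV: "C \<subseteq> V'" and clC: "is_clique E' C"
    using C unfolding is_kclique_def by auto
  have "complete_edges C \<subseteq> E'" using clC unfolding is_clique_def complete_edges_def by auto
  moreover have "ktree k C (complete_edges C)" by (rule ktree.base[OF fC cC])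
  moreover have "is_kclique k C (complete_edges C) C"
    using fC cC unfolding is_kclique_def is_clique_def complete_edges_def by blast
  ultimately have "(C, complete_edges C) \<in> Kv {C}"
    using CV wC cC unfolding Kv_def subD_def sub_ktrees_def by auto
  then have "Kv {C} \<noteq> {}" by blast
  then show ?thesis using Kv_fin by (simp add: Suc_le_eq card_gt_0_iff)
qed
end



lemma base_sub:
  assumes "finite V" "card V = k"
  shows "sub_ktrees k V (complete_edges V) = {(V, complete_edges V)}"
proof
  show "sub_ktrees k V (complete_edges V) \<subseteq> {(V, complete_edges V)}"
  proof
    fix S assume S: "S \<in> sub_ktrees k V (complete_edges V)"
    obtain A B where AB: "S = (A, B)" by (cases S)
    have A: "A \<subseteq> V" and T: "ktree k A B" using S AB unfolding sub_ktrees_def by auto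
    have "k \<le> card A" using ktree_basic[OF T] by simp
    hence AV: "A = V" using A assms by (intro card_seteq) auto
    hence "card A = k" using assms by simp
    hence "B = complete_edges A" using ktree_card_k[OF T] by simp
    then show "S \<in> {(V, complete_edges V)}" using AB AV by simp
  qed
next
  show "{(V, complete_edges V)} \<subseteq> sub_ktrees k V (complete_edges V)"
    using ktree.base[OF assms] unfolding sub_ktrees_def by auto
qed

lemma main:
  assumes "ktree k V E"
  shows "1 \<le> k \<Longrightarrow> \<forall>D\<in>Ds. is_kclique k V E D \<Longrightarrow> is_kclique k V E C \<Longrightarrow>
    cnt k V E Ds + k \<le> cnt k V E (insert C Ds) + sm k V E (insert C Ds)"
  using assms
proof (induction arbitrary: Ds C)
  case (base V)
  have T: "ktree k V (complete_edges V)" by (rule ktree.base[OF base.hyps])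
  have "subD k V (complete_edges V) X = {(V, complete_edges V)}"
    if "\<forall>D\<in>X. is_kclique k V (complete_edges V) D" for X
    using that base_sub[OF base.hyps] unfolding subD_def by auto
  moreover have "\<forall>D\<in>insert C Ds. is_kclique k V (complete_edges V) D" using base.prems by auto
  ultimately show ?case using base.prems base.hyps unfolding cnt_def sm_def by simp
next
  case (step V E Q w)
  interpret ext_ctx k V E Q w using step.hyps step.prems(1) by unfold_locales auto
  have Ds: "\<forall>D\<in>Ds. is_kclique k V' E' D" using step.prems(2) .
  have C: "is_kclique k V' E' C" using step.prems(3) .
  have DsC: "\<forall>D\<in>insert C Ds. is_kclique k V' E' D" using Ds C by auto
  note cD = cnt_decomp[OF Ds] and cDC = cnt_decomp[OF DsC] and sDC = sm_decomp[OF DsC]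
  have Dpp0: "\<forall>D\<in>Dpp Ds. is_kclique k V E D"
    using Qc Ds kc_down unfolding Dpp_def by auto
  have K1: "card (Kv Ds) \<le> k" by (rule Kv_le_k)
  show ?case
  proof (cases "w \<in> C")
    case False
    have C0: "is_kclique k V E C" by (rule kc_down[OF C False])
    have DppC: "Dpp (insert C Ds) = insert C (Dpp Ds)" using False unfolding Dpp_def by auto
    have IH1: "cnt k V E (Dpp Ds) + k \<le> cnt k V E (insert C (Dpp Ds)) + sm k V E (insert C (Dpp Ds))"
      using step.IH[OF step.prems(1) Dpp0 C0] .
    show ?thesis
    proof (cases "\<exists>D\<in>Ds. w \<in> D")
      case True
      then obtain D where D: "D \<in> Ds" "w \<in> D" by blast
      have z1: "cnt k V E Ds = 0" using subD_empty[OF D] unfolding cnt_def by simp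
      have Kle: "card (Kv Ds) \<le> 1" by (rule Kv_le_1[OF D])
      have pos: "1 \<le> cnt k V E (insert C (Dpp Ds))"
        using cnt_pos[OF step.hyps(1)] Dpp0 C0 by auto
      show ?thesis unfolding cD cDC sDC DppC using z1 Kle pos IH1 by linarith
    next
      case False
      hence Dp: "Dpp Ds = insert Q Ds" unfolding Dpp_def by auto
      have Ds0: "\<forall>D\<in>Ds. is_kclique k V E D" using Ds kc_down False by blast
      have IH2: "cnt k V E Ds + k \<le> cnt k V E (insert C Ds) + sm k V E (insert C Ds)"
        using step.IH[OF step.prems(1) Ds0 C0] .
      show ?thesis unfolding cD cDC sDC DppC using IH1 IH2 K1 by linarith
    qed
  next
    case True
    have DppC: "Dpp (insert C Ds) = Dpp Ds" using True unfolding Dpp_def by auto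
    have z2: "cnt k V E (insert C Ds) = 0" "sm k V E (insert C Ds) = 0"
      using subD_empty[of C "insert C Ds", OF _ True] unfolding cnt_def sm_def by auto
    show ?thesis
    proof (cases "\<exists>D\<in>Ds. w \<in> D")
      case True
      then obtain D where D: "D \<in> Ds" "w \<in> D" by blast
      have z1: "cnt k V E Ds = 0" using subD_empty[OF D] unfolding cnt_def by simp
      have Kle: "card (Kv Ds) \<le> 1" by (rule Kv_le_1[OF D])
      have pos: "1 \<le> cnt k V E (Dpp Ds)" using cnt_pos[OF step.hyps(1) Dpp0] .
      have sge: "card V \<le> sm k V E (Dpp Ds)" using sm_ge[OF step.hyps(1) Dpp0] .
      show ?thesis unfolding cD cDC sDC DppC z2 using z1 Kle pos sge kV by linarith
    next
      case False
      hence Dp: "Dpp Ds = insert Q Ds" unfolding Dpp_def by auto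
      have Ds0: "\<forall>D\<in>Ds. is_kclique k V E D" using Ds kc_down False by blast
      have IH2: "cnt k V E Ds + k \<le> cnt k V E (insert Q Ds) + sm k V E (insert Q Ds)"
        using step.IH[OF step.prems(1) Ds0 Qc] .
      have KK: "card (Kv Ds) \<le> k * card (Kv (insert C Ds))"
      proof (cases "Ds = {}")
        case True
        have "1 \<le> card (Kv {C})" by (rule Kv_C[OF C \<open>w \<in> C\<close>])
        hence m: "k * 1 \<le> k * card (Kv {C})" by (rule mult_le_mono2)
        have "card (Kv {}) \<le> k" using K1 True by simp
        then show ?thesis using m unfolding True by linarith
      next
        case False
        then obtain D where "D \<in> Ds" by blast
        moreover have "w \<notin> D" using \<open>D \<in> Ds\<close> \<open>\<not> (\<exists>D\<in>Ds. w \<in> D)\<close> by blast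
        ultimately have "Kv Ds = {}" by (rule Kv_0)
        then show ?thesis by simp
      qed
      show ?thesis unfolding cD cDC sDC DppC z2 Dp using IH2 KK by linarith
    qed
  qed
qed


theorem lemma5p1:
  fixes k :: nat and V :: "'a set" and E :: "'a set set" and C :: "'a set"
  assumes "k \<ge> 1"
    and "ktree k V E"
    and "is_kclique k V E C"
  shows "R_sum k V E C > N_bar k V E C"
proof -
  have m: "cnt k V E {} + k \<le> cnt k V E {C} + sm k V E {C}"
    using main[OF assms(2) assms(1) _ assms(3), of "{}"] by simp
  have eqR: "R_sum k V E C = sm k V E {C}"
    unfolding R_sum_def sm_def subD_def by simp
  have s1: "{S \<in> sub_ktrees k V E. \<not> is_kclique k (fst S) (snd S) C} = subD k V E {} - subD k V E {C}"
    unfolding subD_def by auto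
  have sub: "subD k V E {C} \<subseteq> subD k V E {}" unfolding subD_def by auto
  have fin: "finite (subD k V E {C})" using subD_fin[OF assms(2)] .
  have eqN: "N_bar k V E C = cnt k V E {} - cnt k V E {C}"
    unfolding N_bar_def s1 cnt_def using card_Diff_subset[OF fin sub] .
  have "cnt k V E {C} \<le> cnt k V E {}"
    unfolding cnt_def by (rule card_mono[OF subD_fin[OF assms(2)] sub])
  then show ?thesis unfolding eqR eqN using m assms(1) by linarith
qed

end
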